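(* Let $\lambda\in\Lambda$ and let $D$ be a ball contained in $K(Q_\lambda,B)$. Then (1) all points of $D$ have the same itinerary for $Q_\lambda$; (2) if this common itinerary is not pre-periodic under the one-sided shift, then $D$ is a wandering disc for $Q_\lambda$ which is not attracted to an attracting periodic orbit.
   Context: Let $p$ be a prime, $\mathbb C_p$ with $p$-adic absolute value, $|p|=1/p$. $\Lambda=\{\lambda\in\mathbb C_p:|\lambda-1|<1\}$, $P_\lambda(z)=\frac{\lambda}{p}z^p+\left(1-\frac{\lambda}{p}\right)z^{p+1}$, $\rho=p^{-1/(p-1)}$. Fix $\hat r\in|\mathbb C_p^*|$, $\hat r>1$, $B=\{z:|z|\le\hat r\}$; $\mathcal H(B)$ is the ring of power series $\sum a_iz^i$ convergent on $B$ with norm $\|f\|_B=\sup_i|a_i|\hat r^{\,i}$. Fix $Q\in\mathcal H(B)$ with $\|Q\|_B<\rho$, $Q^*_\lambda=P_\lambda+Q$, and let $h(\lambda)$ be the unique fixed point of $Q^*_\lambda$ in $\{z:|z-1|\le|Q(1)|/p\}$. Define $Q_\lambda(z)=P_\lambda(z+h(\lambda)-1)+Q(z+h(\lambda)-1)+1-h(\lambda)$ for $z\in B$, and $K(Q_\lambda,B)=\{z\in B:Q_\lambda^n(z)\in B\ \forall n\ge0\}$. Let $B_0=\{z:|z|<1\}$, $B_1=\{z:|z-1|<1\}$; one has $K(Q_\lambda,B)\subset B_0\sqcup B_1$. The itinerary of $z\in K(Q_\lambda,B)$ is the sequence $\theta_0\theta_1\theta_2\ldots\in\{0,1\}^{\mathbb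 N\cup\{0\}}$ with $Q_\lambda^n(z)\in B_{\theta_n}$ for all $n\ge0$. $D$ is a wandering disc if $Q_\lambda^n(D)\cap Q_\lambda^m(D)\neq\emptyset$ only when $n=m$; it is not attracted to an attracting periodic orbit if no point of $D$ lies in an open ball contained in the basin of attraction of an attracting periodic point $z_0$ (of period $k$, with $|(Q_\lambda^k)'(z_0)|<1$). *)

theory Defs
  imports "HOL-Computational_Algebra.Computational_Algebra"
begin

text \<open>The field C_p is modelled abstractly: a field of characteristic 0 together with an
absolute value av satisfying the properties which characterise C_p up to isometric
isomorphism.\<close>

definition conv_to :: "('a::field \<Rightarrow> real) \<Rightarrow> (nat \<Rightarrow> 'a) \<Rightarrow> 'a \<Rightarrow> bool" where
  "conv_to av s L \<longleftrightarrow> (\<forall>e>0. \<exists>N. \<forall>n\<ge>N. av (s n - L) < e)"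

definition cauchy_av :: "('a::field \<Rightarrow> real) \<Rightarrow> (nat \<Rightarrow> 'a) \<Rightarrow> bool" where
  "cauchy_av av s \<longleftrightarrow> (\<forall>e>0. \<exists>N. \<forall>m\<ge>N. \<forall>n\<ge>N. av (s m - s n) < e)"

definition is_Cp :: "('a::field_char_0 \<Rightarrow> real) \<Rightarrow> nat \<Rightarrow> bool" where
  "is_Cp av p \<longleftrightarrow> prime p
     \<and> (\<forall>x. 0 \<le> av x) \<and> (\<forall>x. av x = 0 \<longleftrightarrow> x = 0)
     \<and> (\<forall>x y. av (x * y) = av x * av y)
     \<and> (\<forall>x y. av (x + y) \<le> max (av x) (av y))
     \<and> av (of_nat p) = 1 / real p
     \<and> (\<forall>s. cauchy_av av s \<longrightarrow> (\<exists>L. conv_to av s L))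
     \<and> (\<forall>f :: 'a poly. 0 < degree f \<longrightarrow> (\<exists>x. poly f x = 0))
     \<and> (\<forall>x e. 0 < e \<longrightarrow> (\<exists>y. av (x - y) < e \<and>
            (\<exists>f :: int poly. f \<noteq> 0 \<and> poly (map_poly of_int f) y = 0)))"

definition ps_eval :: "('a::field \<Rightarrow> real) \<Rightarrow> (nat \<Rightarrow> 'a) \<Rightarrow> 'a \<Rightarrow> 'a" where
  "ps_eval av a z = (THE L. conv_to av (\<lambda>n. \<Sum>i<n. a i * z ^ i) L)"

definition closed_disc :: "('a::field \<Rightarrow> real) \<Rightarrow> real \<Rightarrow> 'a set" where
  "closed_disc av r = {z. av z \<le> r}"

definition in_H :: "('a::field \<Rightarrow> real) \<Rightarrow> real \<Rightarrow> (nat \<Rightarrow> 'a) \<Rightarrow> bool" where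
  "in_H av rh a \<longleftrightarrow> (\<forall>z \<in> closed_disc av rh. \<exists>L. conv_to av (\<lambda>n. \<Sum>i<n. a i * z ^ i) L)"

definition Bnorm :: "('a::field \<Rightarrow> real) \<Rightarrow> real \<Rightarrow> (nat \<Rightarrow> 'a) \<Rightarrow> real" where
  "Bnorm av rh a = (SUP i. av (a i) * rh ^ i)"

definition rho :: "nat \<Rightarrow> real" where
  "rho p = real p powr (- 1 / (real p - 1))"

definition Pmap :: "nat \<Rightarrow> 'a::field \<Rightarrow> 'a \<Rightarrow> 'a" where
  "Pmap p lam z = lam / of_nat p * z ^ p + (1 - lam / of_nat p) * z ^ (p + 1)"

definition Qstar :: "('a::field \<Rightarrow> real) \<Rightarrow> (nat \<Rightarrow> 'a) \<Rightarrow> nat \<Rightarrow> 'a \<Rightarrow> 'a \<Rightarrow> 'a" where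
  "Qstar av q p lam z = Pmap p lam z + ps_eval av q z"

definition hfix :: "('a::field \<Rightarrow> real) \<Rightarrow> (nat \<Rightarrow> 'a) \<Rightarrow> nat \<Rightarrow> 'a \<Rightarrow> 'a" where
  "hfix av q p lam = (THE w. av (w - 1) \<le> av (ps_eval av q 1) / real p \<and> Qstar av q p lam w = w)"

definition Qlam :: "('a::field \<Rightarrow> real) \<Rightarrow> (nat \<Rightarrow> 'a) \<Rightarrow> nat \<Rightarrow> 'a \<Rightarrow> 'a \<Rightarrow> 'a" where
  "Qlam av q p lam z = (let h = hfix av q p lam in
     Pmap p lam (z + h - 1) + ps_eval av q (z + h - 1) + 1 - h)"

definition Kset :: "('a::field \<Rightarrow> real) \<Rightarrow> real \<Rightarrow> ('a \<Rightarrow> 'a) \<Rightarrow> 'a set" where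
  "Kset av rh f = {z \<in> closed_disc av rh. \<forall>n. (f ^^ n) z \<in> closed_disc av rh}"

definition open_ball :: "('a::field \<Rightarrow> real) \<Rightarrow> 'a \<Rightarrow> real \<Rightarrow> 'a set" where
  "open_ball av c r = {z. av (z - c) < r}"

definition is_ball :: "('a::field \<Rightarrow> real) \<Rightarrow> 'a set \<Rightarrow> bool" where
  "is_ball av D \<longleftrightarrow> (\<exists>c r. 0 < r \<and> (D = {z. av (z - c) < r} \<or> D = {z. av (z - c) \<le> r}))"

definition itinerary :: "('a::field \<Rightarrow> real) \<Rightarrow> ('a \<Rightarrow> 'a) \<Rightarrow> 'a \<Rightarrow> (nat \<Rightarrow> nat) \<Rightarrow> bool" where
  "itinerary av f z \<theta> \<longleftrightarrow> (\<forall>n. (\<theta> n = 0 \<and> av ((f ^^ n) z) < 1) \<or> (\<theta> n = 1 \<and> av ((f ^^ n) z - 1) < 1))"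

definition preperiodic_seq :: "(nat \<Rightarrow> nat) \<Rightarrow> bool" where
  "preperiodic_seq \<theta> \<longleftrightarrow> (\<exists>N k. 0 < k \<and> (\<forall>n\<ge>N. \<theta> (n + k) = \<theta> n))"

definition wandering :: "('a \<Rightarrow> 'a) \<Rightarrow> 'a set \<Rightarrow> bool" where
  "wandering f D \<longleftrightarrow> (\<forall>n m. (f ^^ n) ` D \<inter> (f ^^ m) ` D \<noteq> {} \<longrightarrow> n = m)"

definition has_deriv_av :: "('a::field \<Rightarrow> real) \<Rightarrow> ('a \<Rightarrow> 'a) \<Rightarrow> 'a \<Rightarrow> 'a \<Rightarrow> bool" where
  "has_deriv_av av g z0 c \<longleftrightarrow> (\<forall>e>0. \<exists>d>0. \<forall>w. 0 < av (w - z0) \<and> av (w - z0) < d \<longrightarrow>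
      av ((g w - g z0) / (w - z0) - c) < e)"

definition attracting_periodic :: "('a::field \<Rightarrow> real) \<Rightarrow> real \<Rightarrow> ('a \<Rightarrow> 'a) \<Rightarrow> 'a \<Rightarrow> nat \<Rightarrow> bool" where
  "attracting_periodic av rh f z0 k \<longleftrightarrow> 0 < k \<and> z0 \<in> Kset av rh f \<and> (f ^^ k) z0 = z0
     \<and> (\<forall>j. 0 < j \<and> j < k \<longrightarrow> (f ^^ j) z0 \<noteq> z0)
     \<and> (\<exists>c. has_deriv_av av (f ^^ k) z0 c \<and> av c < 1)"

definition basin :: "('a::field \<Rightarrow> real) \<Rightarrow> real \<Rightarrow> ('a \<Rightarrow> 'a) \<Rightarrow> 'a \<Rightarrow> nat \<Rightarrow> 'a set" where
  "basin av rh f z0 k = {z \<in> Kset av rh f. \<exists>m. conv_to av (\<lambda>n. (f ^^ (n * k + m)) z) z0}"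

definition attracted :: "('a::field \<Rightarrow> real) \<Rightarrow> real \<Rightarrow> ('a \<Rightarrow> 'a) \<Rightarrow> 'a set \<Rightarrow> bool" where
  "attracted av rh f D \<longleftrightarrow> (\<exists>z\<in>D. \<exists>z0 k c r. attracting_periodic av rh f z0 k \<and> 0 < r \<and>
      z \<in> open_ball av c r \<and> open_ball av c r \<subseteq> basin av rh f z0 k)"

end

theory Submission
  imports Defs
begin

locale cpl =
  fixes av :: "'a::field_char_0 \<Rightarrow> real" and p :: nat
  assumes cp: "is_Cp av p"
begin

lemma prime_p: "prime p" using cp unfolding is_Cp_def by blast
lemma p_ge2: "p \<ge> 2" using prime_p prime_ge_2_nat by blast
lemma av_nonneg[simp]: "0 \<le> av x" using cp unfolding is_Cp_def by blast
lemma av_eq0[simp]: "av x = 0 \<longleftrightarrow> x = 0" using cp unfolding is_Cp_def by blast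
lemma av_mult: "av (x * y) = av x * av y" using cp unfolding is_Cp_def by blast
lemma av_ultra: "av (x + y) \<le> max (av x) (av y)" using cp unfolding is_Cp_def by blast
lemma av_p: "av (of_nat p) = 1 / real p" using cp unfolding is_Cp_def by blast
lemma complete: "cauchy_av av s \<Longrightarrow> \<exists>L. conv_to av s L" using cp unfolding is_Cp_def by blast
lemma algclosed: "0 < degree (f::'a poly) \<Longrightarrow> \<exists>x. poly f x = 0" using cp unfolding is_Cp_def by blast

lemma av_0[simp]: "av 0 = 0" by simp
lemma av_pos: "x \<noteq> 0 \<Longrightarrow> 0 < av x" using av_nonneg[of x] av_eq0[of x] by linarith

lemma av_1[simp]: "av 1 = 1"
proof -
  have "av 1 = av 1 * av 1" using av_mult[of 1 1] by simp
  moreover have "av 1 \<noteq> 0" by simp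
  ultimately show ?thesis by (metis mult_cancel_left1)
qed

lemma av_m1[simp]: "av (-1) = 1"
proof -
  have "av (-1) * av (-1) = 1" using av_mult[of "-1" "-1"] by simp
  then have "sqrt (av (-1) * av (-1)) = 1" by simp
  then show ?thesis using av_nonneg[of "-1"] by (simp add: real_sqrt_mult_self)
qed

lemma av_minus[simp]: "av (- x) = av x"
  using av_mult[of "-1" x] by simp

lemma av_commute: "av (x - y) = av (y - x)"
  by (metis av_minus minus_diff_eq)

lemma av_diff: "av (x - y) \<le> max (av x) (av y)"
  using av_ultra[of x "-y"] by simp

lemma av_tri: "av (x - z) \<le> max (av (x - y)) (av (y - z))"
  using av_ultra[of "x - y" "y - z"] by simp

lemma av_power: "av (x ^ n) = av x ^ n"
  by (induction n) (auto simp: av_mult)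

lemma av_inverse: "av (inverse x) = inverse (av x)"
proof (cases "x = 0")
  case False
  have "av x * av (inverse x) = 1" using av_mult[of x "inverse x"] False by (simp del: av_eq0)
  then show ?thesis by (metis inverse_unique)
qed simp

lemma av_divide: "av (x / y) = av x / av y"
  by (simp add: divide_inverse av_mult av_inverse)

lemma av_dom: assumes "av y < av x" shows "av (x + y) = av x"
proof -
  have "av x \<le> max (av (x + y)) (av (- y))" using av_ultra[of "x+y" "-y"] by simp
  then have "av x \<le> av (x + y)" using assms by auto
  moreover have "av (x + y) \<le> av x" using av_ultra[of x y] assms by auto
  ultimately show ?thesis by simp
qed

lemma av_dom_diff: assumes "av y < av x" shows "av (x - y) = av x"
  using av_dom[of "-y" x] assms by simp

lemma av_of_nat_le1: "av (of_nat n) \<le> 1"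
proof (induction n)
  case (Suc n)
  then show ?case using av_ultra[of 1 "of_nat n"] by simp
qed simp

lemma av_of_int_le1: "av (of_int n) \<le> 1"
  by (metis av_minus av_of_nat_le1 of_int_of_nat)

lemma av_sum_le:
  assumes "finite A" "\<And>i. i \<in> A \<Longrightarrow> av (g i) \<le> M" "0 \<le> M"
  shows "av (sum g A) \<le> M"
  using assms
proof (induction A rule: finite_induct)
  case (insert x F)
  then have "av (g x) \<le> M" "av (sum g F) \<le> M" by auto
  then show ?case using av_ultra[of "g x" "sum g F"] by (simp add: sum.insert[OF insert(1,2)])
qed simp

lemma av_sum_less:
  assumes "finite A" "\<And>i. i \<in> A \<Longrightarrow> av (g i) < M" "0 < M"
  shows "av (sum g A) < M"
  using assms
proof (induction A rule: finite_induct)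
  case (insert x F)
  then have "av (g x) < M" "av (sum g F) < M" by auto
  then show ?case using av_ultra[of "g x" "sum g F"] by (simp add: sum.insert[OF insert(1,2)])
qed simp

lemma av_le1_sum: "av x \<le> 1 \<Longrightarrow> av y \<le> 1 \<Longrightarrow> av (x + y) \<le> 1"
  using av_ultra[of x y] by simp

lemma power_diff_bound:
  assumes "av x \<le> r" "av y \<le> r" "0 \<le> r"
  shows "av (x ^ n - y ^ n) \<le> av (x - y) * r ^ (n - 1)"
proof (cases n)
  case 0 then show ?thesis by simp
next
  case (Suc m)
  have eq: "x ^ n - y ^ n = (x - y) * (\<Sum>i<n. y ^ (n - Suc i) * x ^ i)"
    by (rule power_diff_sumr2)
  have "av (\<Sum>i<n. y ^ (n - Suc i) * x ^ i) \<le> r ^ m"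
  proof (rule av_sum_le)
    fix i assume i: "i \<in> {..<n}"
    have "av (y ^ (n - Suc i) * x ^ i) = av y ^ (n - Suc i) * av x ^ i"
      by (simp add: av_mult av_power)
    also have "\<dots> \<le> r ^ (n - Suc i) * r ^ i"
      using assms by (intro mult_mono power_mono) auto
    also have "\<dots> = r ^ m" using i Suc by (simp add: power_add[symmetric])
    finally show "av (y ^ (n - Suc i) * x ^ i) \<le> r ^ m" .
  qed (use assms in auto)
  then show ?thesis unfolding eq av_mult using Suc
    by (simp add: mult_left_mono)
qed

lemma power_diff_le1:
  assumes "av x \<le> 1" "av y \<le> 1"
  shows "av (x ^ n - y ^ n) \<le> av (x - y)"
  using power_diff_bound[OF assms, of n] by simp

lemma p_real: "real p \<ge> 2" using p_ge2 by simp

lemma av_lam: assumes "av (lam - 1) < 1" shows "av lam = 1"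
  using av_dom[of "lam - 1" 1] assms by simp

lemma av_lamp: assumes "av (lam - 1) < 1" shows "av (lam / of_nat p) = real p"
  using av_lam[OF assms] av_p p_ge2 by (simp add: av_divide)

lemma av_1_lamp: assumes "av (lam - 1) < 1" shows "av (1 - lam / of_nat p) = real p"
proof -
  have "av 1 < av (lam / of_nat p)" using av_lamp[OF assms] p_ge2 by simp
  then show ?thesis using av_dom_diff[of 1 "lam / of_nat p"] av_commute[of 1 "lam / of_nat p"]
    av_lamp[OF assms] by simp
qed

end

context cpl begin

lemma conv_unique: assumes "conv_to av s L" "conv_to av s L'" shows "L = L'"
proof (rule ccontr)
  assume "L \<noteq> L'"
  then have e: "0 < av (L - L')" by (simp add: av_pos)
  obtain N1 where N1: "\<forall>n\<ge>N1. av (s n - L) < av (L - L')" using assms(1) e unfolding conv_to_def by blast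
  obtain N2 where N2: "\<forall>n\<ge>N2. av (s n - L') < av (L - L')" using assms(2) e unfolding conv_to_def by blast
  have a: "av (L - s (max N1 N2)) < av (L - L')" using N1 av_commute by (metis max.cobounded1)
  have b: "av (s (max N1 N2) - L') < av (L - L')" using N2 by simp
  have "av (L - L') \<le> max (av (L - s (max N1 N2))) (av (s (max N1 N2) - L'))" by (rule av_tri)
  with a b show False by linarith
qed

lemma conv_bound:
  assumes "conv_to av s L" "\<And>n. n \<ge> N \<Longrightarrow> av (s n - C) \<le> M"
  shows "av (L - C) \<le> M"
proof (rule ccontr)
  assume c: "\<not> ?thesis"
  have M0: "0 \<le> M" using assms(2)[of N] av_nonneg[of "s N - C"] by linarith
  then have e: "0 < av (L - C)" using c by linarith
  obtain N1 where N1: "\<forall>n\<ge>N1. av (s n - L) < av (L - C)" using assms(1) e unfolding conv_to_def by blast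
  define n where "n = max N N1"
  have a: "av (L - s n) < av (L - C)" using N1 av_commute n_def by (metis max.cobounded2)
  have b: "av (s n - C) \<le> M" using assms(2) n_def by simp
  have "av (L - C) \<le> max (av (L - s n)) (av (s n - C))" by (rule av_tri)
  with a b c show False by linarith
qed

lemma conv_diff:
  assumes "conv_to av s L" "conv_to av t L'"
  shows "conv_to av (\<lambda>n. s n - t n) (L - L')"
  unfolding conv_to_def
proof (intro allI impI)
  fix e :: real assume e: "0 < e"
  obtain N1 where N1: "\<forall>n\<ge>N1. av (s n - L) < e" using assms(1) e unfolding conv_to_def by blast
  obtain N2 where N2: "\<forall>n\<ge>N2. av (t n - L') < e" using assms(2) e unfolding conv_to_def by blast
  show "\<exists>N. \<forall>n\<ge>N. av (s n - t n - (L - L')) < e"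
  proof (intro exI allI impI)
    fix n assume "max N1 N2 \<le> n"
    then have a: "av (s n - L) < e" and b: "av (t n - L') < e" using N1 N2 by auto
    have eq: "s n - t n - (L - L') = (s n - L) - (t n - L')" by simp
    show "av (s n - t n - (L - L')) < e" unfolding eq using av_diff[of "s n - L" "t n - L'"] a b
      by (metis max_less_iff_conj le_less_trans)
  qed
qed

lemma ps_eval_eq: assumes "conv_to av (\<lambda>n. \<Sum>i<n. a i * z ^ i) L" shows "ps_eval av a z = L"
  unfolding ps_eval_def using assms conv_unique by blast

end

locale setting = cpl av p for av :: "'a::field_char_0 \<Rightarrow> real" and p +
  fixes rh :: real and q :: "nat \<Rightarrow> 'a" and lam :: 'a
  assumes rh1: "1 < rh" and x0ex: "\<exists>x. x \<noteq> 0 \<and> av x = rh"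
    and inH: "in_H av rh q" and bn: "Bnorm av rh q < rho p" and lam1: "av (lam - 1) < 1"
begin

abbreviation "Q \<equiv> ps_eval av q"
abbreviation "Bn \<equiv> Bnorm av rh q"

lemma ps_conv: assumes "av u \<le> rh" shows "conv_to av (\<lambda>n. \<Sum>i<n. q i * u ^ i) (Q u)"
proof -
  obtain L where "conv_to av (\<lambda>n. \<Sum>i<n. q i * u ^ i) L"
    using inH assms unfolding in_H_def closed_disc_def by blast
  then show ?thesis using ps_eval_eq by simp
qed

lemma terms_to0: assumes "0 < e" shows "\<exists>N. \<forall>i\<ge>N. av (q i) * rh ^ i < e"
proof -
  obtain x where x: "x \<noteq> 0" "av x = rh" using x0ex by blast
  have c: "conv_to av (\<lambda>n. \<Sum>i<n. q i * x ^ i) (Q x)" using ps_conv x by simp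
  have e2: "0 < e / 2" using assms by simp
  obtain N where N: "\<forall>n\<ge>N. av ((\<Sum>i<n. q i * x ^ i) - Q x) < e / 2" using c e2 unfolding conv_to_def by blast
  show ?thesis
  proof (intro exI allI impI)
    fix i assume i: "N \<le> i"
    have "q i * x ^ i = (\<Sum>j<Suc i. q j * x ^ j) - Q x - ((\<Sum>j<i. q j * x ^ j) - Q x)" by simp
    then have "av (q i * x ^ i) \<le> max (av ((\<Sum>j<Suc i. q j * x ^ j) - Q x)) (av ((\<Sum>j<i. q j * x ^ j) - Q x))"
      by (metis av_diff)
    also have "\<dots> < e" using N[rule_format, of "Suc i"] N[rule_format, of i] i e2
      by (simp del: sum.lessThan_Suc)
    finally show "av (q i) * rh ^ i < e" by (simp add: av_mult av_power x)
  qed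
qed

lemma bdd: "bdd_above (range (\<lambda>i. av (q i) * rh ^ i))"
proof -
  obtain N where N: "\<forall>i\<ge>N. av (q i) * rh ^ i < 1" using terms_to0[of 1] by auto
  define M where "M = max 1 (Max ((\<lambda>i. av (q i) * rh ^ i) ` {..<N}))"
  have "av (q i) * rh ^ i \<le> M" for i
  proof (cases "i < N")
    case True then show ?thesis unfolding M_def by (simp add: max.coboundedI2)
  next
    case False then show ?thesis using N unfolding M_def by (simp add: max.coboundedI1 less_imp_le)
  qed
  then show ?thesis by (intro bdd_aboveI2) auto
qed

lemma term_le: "av (q i) * rh ^ i \<le> Bn"
  unfolding Bnorm_def by (rule cSUP_upper[OF _ bdd]) simp

lemma Bn_nonneg: "0 \<le> Bn"
  using term_le[of 0] av_nonneg[of "q 0"] by (simp del: av_nonneg)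

lemma rho_lt1: "rho p < 1"
proof -
  have "real p > 1" using p_ge2 by simp
  moreover have "- 1 / (real p - 1) < 0" using p_ge2 by (simp add: divide_neg_pos)
  ultimately show ?thesis unfolding rho_def by (simp add: powr_less_one)
qed

lemma Bn_lt1: "Bn < 1" using bn rho_lt1 by simp

lemma rh_pos: "0 < rh" using rh1 by simp

lemma av_q_le: "av (q i) * r ^ i \<le> Bn" if "0 \<le> r" "r \<le> rh"
proof -
  have "av (q i) * r ^ i \<le> av (q i) * rh ^ i" using that by (intro mult_left_mono power_mono) auto
  then show ?thesis using term_le[of i] by simp
qed

lemma ps_tail:
  assumes u: "av u \<le> rh" and tau: "\<And>i. i \<ge> N \<Longrightarrow> av (q i) * rh ^ i \<le> \<tau>" and t0: "0 \<le> \<tau>"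
  shows "av (Q u - (\<Sum>i<N. q i * u ^ i)) \<le> \<tau>"
proof (rule conv_bound[OF ps_conv[OF u], of N])
  fix n assume n: "N \<le> n"
  have "(\<Sum>i<n. q i * u ^ i) - (\<Sum>i<N. q i * u ^ i) = (\<Sum>i\<in>{N..<n}. q i * u ^ i)"
    using sum_diff_nat_ivl[of 0 N n "\<lambda>i. q i * u ^ i"] n by (simp add: atLeast0LessThan)
  also have "av \<dots> \<le> \<tau>"
  proof (rule av_sum_le)
    fix i assume i: "i \<in> {N..<n}"
    have "av (q i * u ^ i) = av (q i) * av u ^ i" by (simp add: av_mult av_power)
    also have "\<dots> \<le> av (q i) * rh ^ i" using u by (intro mult_left_mono power_mono) auto
    also have "\<dots> \<le> \<tau>" using tau i by simp
    finally show "av (q i * u ^ i) \<le> \<tau>" .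
  qed (use t0 in auto)
  finally show "av ((\<Sum>i<n. q i * u ^ i) - (\<Sum>i<N. q i * u ^ i)) \<le> \<tau>" .
qed

lemma ps_bound: assumes "av u \<le> rh" shows "av (Q u) \<le> Bn"
  using ps_tail[OF assms, of 0 Bn] term_le Bn_nonneg by simp

lemma ps_lt1: assumes "av u \<le> rh" shows "av (Q u) < 1"
  using ps_bound[OF assms] Bn_lt1 by simp

lemma term_lip:
  assumes "av u \<le> rh" "av v \<le> rh"
  shows "av (q i * u ^ i - q i * v ^ i) \<le> av (u - v)"
proof (cases i)
  case 0 then show ?thesis by simp
next
  case (Suc m)
  have "av (q i * u ^ i - q i * v ^ i) = av (q i) * av (u ^ i - v ^ i)"
    by (simp add: av_mult right_diff_distrib[symmetric])
  also have "\<dots> \<le> av (q i) * (av (u - v) * rh ^ m)"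
    using power_diff_bound[OF assms, of i] rh_pos Suc by (intro mult_left_mono) auto
  also have "\<dots> = av (u - v) * (av (q i) * rh ^ m)" by simp
  also have "\<dots> \<le> av (u - v) * 1"
  proof (rule mult_left_mono)
    have "av (q i) * rh ^ m \<le> av (q i) * rh ^ i"
      using Suc rh1 by (intro mult_left_mono power_increasing) auto
    then show "av (q i) * rh ^ m \<le> 1" using term_le[of i] Bn_lt1 by simp
  qed simp
  finally show ?thesis by simp
qed

lemma QN_lip:
  assumes "av u \<le> rh" "av v \<le> rh"
  shows "av ((\<Sum>i<N. q i * u ^ i) - (\<Sum>i<N. q i * v ^ i)) \<le> av (u - v)"
  unfolding sum_subtractf[symmetric]
  by (rule av_sum_le) (use term_lip[OF assms] in auto)

lemma ps_lip:
  assumes "av u \<le> rh" "av v \<le> rh"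
  shows "av (Q u - Q v) \<le> av (u - v)"
  using conv_bound[OF conv_diff[OF ps_conv[OF assms(1)] ps_conv[OF assms(2)]], of 0 0 "av (u - v)"]
    QN_lip[OF assms] by simp

end

context setting begin

abbreviation "Pm \<equiv> Pmap p lam"
definition "beta = (of_nat p :: 'a) - lam / of_nat p"
definition "sig = av (Q 1) / real p"
definition "Gz z = Qstar av q p lam z - z"
definition "Tm z = z - Gz z / beta"

lemma av_beta: "av beta = real p"
proof -
  have "1 / real p \<le> 1 / 2" using p_ge2 by (simp add: divide_le_eq)
  then have "1 / real p < real p" using p_ge2 by linarith
  then have "av (of_nat p :: 'a) < av (- (lam / of_nat p))" using av_p av_lamp[OF lam1] by simp
  then show ?thesis using av_dom[of "of_nat p" "- (lam / of_nat p)"] av_lamp[OF lam1]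
    unfolding beta_def by (simp add: add.commute)
qed

lemma beta_nz: "beta \<noteq> 0" using av_beta p_ge2 by (metis av_0 of_nat_0 of_nat_le_0_iff not_numeral_le_zero)

lemma sig_nonneg: "0 \<le> sig" unfolding sig_def by simp

lemma sig_lt1: "sig < 1"
proof -
  have "av (Q 1) < 1" using ps_lt1 rh1 by simp
  then show ?thesis unfolding sig_def using p_ge2 by (simp add: divide_less_eq)
qed

lemma p_sig_le1: "real p * sig \<le> 1"
  unfolding sig_def using ps_lt1[of 1] rh1 p_ge2 by simp

lemma Pmap_gen: "(c::'a) * z ^ p + (1 - c) * z ^ (p + 1) = z ^ (p + 1) - c * z ^ p * (z - 1)"
  by (simp add: algebra_simps)

lemma Pmap_alt: "Pm z = z ^ (p + 1) - (lam / of_nat p) * z ^ p * (z - 1)"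
  unfolding Pmap_def by (rule Pmap_gen)

lemma key_gen:
  "((z ^ (p + 1) - c * z ^ p * (z - 1)) + A - z) - ((w ^ (p + 1) - c * w ^ p * (w - 1)) + B - w)
    - (P - c) * (z - w) =
     (z ^ (p + 1) - w ^ (p + 1) - (P + 1) * (z - w))
     - c * ((z ^ p - w ^ p) * (z - 1) + (w ^ p - 1) * (z - w))
     + (A - (B::'a))"
  by (simp add: algebra_simps)

lemma Pm1: "Pm 1 = 1" unfolding Pmap_def by simp

lemma key_ident:
  "Gz z - Gz w - beta * (z - w) =
     (z ^ (p + 1) - w ^ (p + 1) - (of_nat p + 1) * (z - w))
     - (lam / of_nat p) * ((z ^ p - w ^ p) * (z - 1) + (w ^ p - 1) * (z - w))
     + (Q z - Q w)"
  unfolding Gz_def Qstar_def Pmap_alt beta_def by (rule key_gen)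

lemma av_le1_near1: "av (z - 1) \<le> 1 \<Longrightarrow> av z \<le> 1"
  using av_ultra[of "z - 1" 1] by simp

lemma key_est:
  assumes z: "av (z - 1) \<le> sig" and w: "av (w - 1) \<le> sig"
  shows "av (Gz z - Gz w - beta * (z - w)) \<le> av (z - w)"
proof -
  have z1: "av z \<le> 1" and w1: "av w \<le> 1" using z w sig_lt1 av_le1_near1 by auto
  have A1: "av (z ^ (p + 1) - w ^ (p + 1)) \<le> av (z - w)" by (rule power_diff_le1[OF z1 w1])
  have "av (of_nat p + 1 :: 'a) \<le> 1" using av_of_nat_le1[of "p+1"] by (simp add: add.commute)
  then have A2: "av ((of_nat p + 1) * (z - w)) \<le> av (z - w)"
    unfolding av_mult by (intro mult_left_le_one_le) auto
  have A: "av (z ^ (p + 1) - w ^ (p + 1) - (of_nat p + 1) * (z - w)) \<le> av (z - w)"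
    using av_diff[of "z ^ (p + 1) - w ^ (p + 1)" "(of_nat p + 1) * (z - w)"] A1 A2 by simp
  have B1: "av ((z ^ p - w ^ p) * (z - 1)) \<le> av (z - w) * sig"
    unfolding av_mult using power_diff_le1[OF z1 w1, of p] z by (intro mult_mono) auto
  have wp: "av (w ^ p - 1) \<le> sig" using power_diff_le1[OF w1, of 1 p] w by simp
  have B2: "av ((w ^ p - 1) * (z - w)) \<le> av (z - w) * sig"
    unfolding av_mult using wp by (simp add: mult.commute[of "av (z - w)"] mult_right_mono)
  have B: "av ((z ^ p - w ^ p) * (z - 1) + (w ^ p - 1) * (z - w)) \<le> av (z - w) * sig"
    using av_ultra[of "(z ^ p - w ^ p) * (z - 1)" "(w ^ p - 1) * (z - w)"] B1 B2 by simp
  have LB: "av ((lam / of_nat p) * ((z ^ p - w ^ p) * (z - 1) + (w ^ p - 1) * (z - w))) \<le> av (z - w)"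
  proof -
    have "av ((lam / of_nat p) * ((z ^ p - w ^ p) * (z - 1) + (w ^ p - 1) * (z - w)))
        \<le> real p * (av (z - w) * sig)"
      unfolding av_mult av_lamp[OF lam1] using B by (intro mult_left_mono) auto
    also have "\<dots> = av (z - w) * (real p * sig)" by simp
    also have "\<dots> \<le> av (z - w)" using p_sig_le1 sig_nonneg
      by (simp add: mult_left_le)
    finally show ?thesis .
  qed
  have C: "av (Q z - Q w) \<le> av (z - w)" using ps_lip z1 w1 rh1 by simp
  show ?thesis unfolding key_ident
    using av_ultra[of "z ^ (p + 1) - w ^ (p + 1) - (of_nat p + 1) * (z - w)
     - (lam / of_nat p) * ((z ^ p - w ^ p) * (z - 1) + (w ^ p - 1) * (z - w))" "Q z - Q w"]
      av_diff[of "z ^ (p + 1) - w ^ (p + 1) - (of_nat p + 1) * (z - w)"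
        "(lam / of_nat p) * ((z ^ p - w ^ p) * (z - 1) + (w ^ p - 1) * (z - w))"] A LB C
    by simp
qed

lemma div_p_le: "0 \<le> x \<Longrightarrow> x / real p \<le> x"
  using p_ge2 by (simp add: divide_le_eq mult_le_cancel_left1)

lemma Tm_lip:
  assumes z: "av (z - 1) \<le> sig" and w: "av (w - 1) \<le> sig"
  shows "av (Tm z - Tm w) \<le> av (z - w) / real p"
proof -
  have "Tm z - Tm w = - ((Gz z - Gz w - beta * (z - w)) / beta)"
    unfolding Tm_def using beta_nz by (simp add: field_simps)
  then have "av (Tm z - Tm w) = av (Gz z - Gz w - beta * (z - w)) / real p"
    by (simp add: av_divide av_beta)
  then show ?thesis using key_est[OF z w] p_ge2 by (simp add: divide_right_mono)
qed

lemma Tm1: "av (Tm 1 - 1) = sig"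
proof -
  have "Tm 1 - 1 = - (Q 1 / beta)" unfolding Tm_def Gz_def Qstar_def Pm1 by simp
  then show ?thesis unfolding sig_def by (simp add: av_divide av_beta)
qed

lemma Tm_maps: assumes z: "av (z - 1) \<le> sig" shows "av (Tm z - 1) \<le> sig"
proof -
  have "av (Tm z - Tm 1) \<le> av (z - 1) / real p" using Tm_lip[OF z, of 1] sig_nonneg by simp
  also have "\<dots> \<le> sig" using z div_p_le[of "av (z - 1)"] by simp
  finally show ?thesis using av_tri[of "Tm z" 1 "Tm 1"] Tm1 by simp
qed

definition "sq n = (Tm ^^ n) 1"

lemma sq_in: "av (sq n - 1) \<le> sig"
  by (induction n) (auto simp: sq_def sig_nonneg intro: Tm_maps)

lemma sq_step: "av (sq (Suc n) - sq n) \<le> sig / real p ^ n"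
proof (induction n)
  case 0 then show ?case using Tm1 by (simp add: sq_def)
next
  case (Suc n)
  have e: "sq (Suc (Suc n)) = Tm (sq (Suc n))" "sq (Suc n) = Tm (sq n)" by (simp_all add: sq_def)
  have "av (sq (Suc (Suc n)) - sq (Suc n)) \<le> av (sq (Suc n) - sq n) / real p"
    using Tm_lip[OF sq_in sq_in, of "Suc n" n] e by simp
  also have "\<dots> \<le> sig / real p ^ n / real p" using Suc p_ge2 by (intro divide_right_mono) auto
  finally show ?case by (simp add: field_simps)
qed

lemma sq_cauchy_aux0: "av (sq (n + k) - sq n) \<le> sig / real p ^ n"
proof (induction k)
  case 0 then show ?case using sig_nonneg by simp
next
  case (Suc k)
  have "sig / real p ^ (n + k) \<le> sig / real p ^ n"
    using p_ge2 sig_nonneg by (intro divide_left_mono power_increasing) auto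
  then show ?case using av_tri[of "sq (Suc (n + k))" "sq n" "sq (n + k)"] sq_step[of "n + k"] Suc by simp
qed

lemma sq_cauchy_aux: "n \<le> m \<Longrightarrow> av (sq m - sq n) \<le> sig / real p ^ n"
  using sq_cauchy_aux0[of n "m - n"] by simp

lemma sq_cauchy: "cauchy_av av sq"
  unfolding cauchy_av_def
proof (intro allI impI)
  fix e :: real assume e: "0 < e"
  obtain N where N: "sig / e < real p ^ N" using real_arch_pow[of "real p" "sig / e"] p_ge2 by auto
  have Ne: "sig / real p ^ N < e" using N e p_ge2 by (simp add: field_simps)
  show "\<exists>N. \<forall>m\<ge>N. \<forall>n\<ge>N. av (sq m - sq n) < e"
  proof (intro exI allI impI)
    fix m n assume m: "N \<le> m" and n: "N \<le> n"
    have "av (sq m - sq n) \<le> sig / real p ^ N"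
    proof (cases "n \<le> m")
      case True
      then have "av (sq m - sq n) \<le> sig / real p ^ n" by (rule sq_cauchy_aux)
      also have "\<dots> \<le> sig / real p ^ N" using n p_ge2 sig_nonneg by (intro divide_left_mono power_increasing) auto
      finally show ?thesis .
    next
      case False
      then have "av (sq n - sq m) \<le> sig / real p ^ m" by (intro sq_cauchy_aux) auto
      also have "\<dots> \<le> sig / real p ^ N" using m p_ge2 sig_nonneg by (intro divide_left_mono power_increasing) auto
      finally show ?thesis by (simp add: av_commute)
    qed
    then show "av (sq m - sq n) < e" using Ne by simp
  qed
qed

lemma fix_exists: "\<exists>L. av (L - 1) \<le> sig \<and> Qstar av q p lam L = L"
proof -
  obtain L where L: "conv_to av sq L" using complete sq_cauchy by blast
  have Lin: "av (L - 1) \<le> sig" using conv_bound[OF L, of 0 1 sig] sq_in by simp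
  have "av (Tm L - L) \<le> 0"
  proof (rule ccontr)
    assume c: "\<not> ?thesis"
    then have e: "0 < av (Tm L - L)" by simp
    obtain N where N: "\<forall>n\<ge>N. av (sq n - L) < av (Tm L - L)" using L e unfolding conv_to_def by blast
    have a: "av (Tm L - Tm (sq N)) \<le> av (L - sq N) / real p" using Tm_lip[OF Lin sq_in] by simp
    have b: "av (L - sq N) / real p \<le> av (L - sq N)" by (rule div_p_le) simp
    have "av (L - sq N) < av (Tm L - L)" using N av_commute by (metis order_refl)
    then have a': "av (Tm L - Tm (sq N)) < av (Tm L - L)" using a b by linarith
    have b': "av (sq (Suc N) - L) < av (Tm L - L)" using N by simp
    have "Tm (sq N) = sq (Suc N)" by (simp add: sq_def)
    then have "av (Tm L - L) \<le> max (av (Tm L - Tm (sq N))) (av (sq (Suc N) - L))"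
      using av_tri[of "Tm L" L "Tm (sq N)"] by simp
    with a' b' show False by linarith
  qed
  then have "Tm L = L" using av_nonneg[of "Tm L - L"] by (simp del: av_nonneg)
  then have "Gz L / beta = 0" unfolding Tm_def by simp
  then have "Gz L = 0" using beta_nz by simp
  then show ?thesis using Lin unfolding Gz_def by auto
qed

lemma fix_unique:
  assumes "av (z - 1) \<le> sig" "Qstar av q p lam z = z" "av (w - 1) \<le> sig" "Qstar av q p lam w = w"
  shows "z = w"
proof -
  have "Gz z = 0" "Gz w = 0" using assms unfolding Gz_def by auto
  then have "av (beta * (z - w)) \<le> av (z - w)" using key_est[OF assms(1,3)] by simp
  then have "real p * av (z - w) \<le> av (z - w)" by (simp add: av_mult av_beta)
  moreover have "2 * av (z - w) \<le> real p * av (z - w)" using p_ge2 by (intro mult_right_mono) auto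
  ultimately have "av (z - w) = 0" using av_nonneg[of "z - w"] by linarith
  then show ?thesis by simp
qed

definition "hh = hfix av q p lam"

lemma hh_prop: "av (hh - 1) \<le> sig \<and> Qstar av q p lam hh = hh"
proof -
  obtain L where L: "av (L - 1) \<le> sig" "Qstar av q p lam L = L" using fix_exists by blast
  have "hh = L" unfolding hh_def hfix_def sig_def[symmetric]
    by (rule the_equality) (use L fix_unique in auto)
  then show ?thesis using L by simp
qed

lemma hh_close: "av (hh - 1) < 1" using hh_prop sig_lt1 by linarith

end

context setting begin

abbreviation "f \<equiv> Qlam av q p lam"
definition "dl = hh - 1"

lemma dl_lt1: "av dl < 1" unfolding dl_def using hh_close by simp

lemma f_eq: "f z = Pm (z + dl) + Q (z + dl) - dl"
  unfolding Qlam_def Let_def dl_def hh_def by (simp add: algebra_simps)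

lemma Pm_fact: "Pm u = u ^ p * (lam / of_nat p + (1 - lam / of_nat p) * u)"
  unfolding Pmap_def by (simp add: algebra_simps)

lemma K_iter: assumes "z \<in> Kset av rh f" shows "(f ^^ n) z \<in> Kset av rh f"
proof -
  have "(f ^^ m) ((f ^^ n) z) = (f ^^ (m + n)) z" for m by (simp add: funpow_add)
  then show ?thesis using assms unfolding Kset_def closed_disc_def by auto
qed

lemma K_le_rh: "z \<in> Kset av rh f \<Longrightarrow> av z \<le> rh"
  unfolding Kset_def closed_disc_def by auto

lemma K_f: "z \<in> Kset av rh f \<Longrightarrow> f z \<in> Kset av rh f"
  using K_iter[of z 1] by simp

lemma av_shift: "av x \<le> r \<Longrightarrow> 1 \<le> r \<Longrightarrow> av (x + dl) \<le> r"
  using av_ultra[of x dl] dl_lt1 by simp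

lemma grow:
  assumes z: "av z \<le> rh" "1 < av z"
  shows "real p * av z \<le> av (f z)"
proof -
  define u where "u = z + dl"
  have au: "av u = av z" unfolding u_def using av_dom[of dl z] z dl_lt1 by simp
  have a1: "av ((1 - lam / of_nat p) * u) = real p * av u" by (simp add: av_mult av_1_lamp[OF lam1])
  have "av (lam / of_nat p) < av ((1 - lam / of_nat p) * u)" unfolding a1 av_lamp[OF lam1]
    using au z p_ge2 by simp
  then have a2: "av (lam / of_nat p + (1 - lam / of_nat p) * u) = real p * av u"
    using av_dom a1 by (metis add.commute)
  have aPm: "av (Pm u) = av u ^ p * (real p * av u)" unfolding Pm_fact av_mult av_power a2 by simp
  have "1 \<le> av u ^ p" using au z by (simp add: one_le_power)
  then have "1 * (real p * av u) \<le> av u ^ p * (real p * av u)"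
    by (intro mult_right_mono) auto
  then have ge: "real p * av u \<le> av (Pm u)" unfolding aPm by simp
  have "real p * 1 \<le> real p * av u" using au z by (intro mult_left_mono) auto
  then have "real p * av u \<ge> 2" using p_ge2 by linarith
  then have big: "1 < av (Pm u)" using ge by linarith
  have uu: "av u \<le> rh" using au z by simp
  have small: "av (Q u - dl) < 1" using av_diff[of "Q u" dl] ps_lt1[OF uu] dl_lt1 by simp
  have "f z = Pm u + (Q u - dl)" unfolding f_eq u_def by simp
  then have "av (f z) = av (Pm u)" using av_dom[of "Q u - dl" "Pm u"] small big by simp
  then show ?thesis using ge au by simp
qed

lemma K_le1: assumes z: "z \<in> Kset av rh f" shows "av z \<le> 1"
proof (rule ccontr)
  assume c: "\<not> av z \<le> 1"
  have "real p ^ n * av z \<le> av ((f ^^ n) z)" for n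
  proof (induction n)
    case 0 then show ?case by simp
  next
    case (Suc n)
    have "1 \<le> real p ^ n" using p_ge2 by (intro one_le_power) auto
    then have "1 * av z \<le> real p ^ n * av z" by (intro mult_right_mono) auto
    then have "1 < av ((f ^^ n) z)" using Suc c by linarith
    then have "real p * av ((f ^^ n) z) \<le> av ((f ^^ Suc n) z)"
      using grow K_le_rh[OF K_iter[OF z, of n]] by simp
    moreover have "real p * (real p ^ n * av z) \<le> real p * av ((f ^^ n) z)"
      using Suc by (intro mult_left_mono) auto
    ultimately show ?case by simp
  qed
  moreover obtain n where n: "rh < real p ^ n" using real_arch_pow[of "real p" rh] p_ge2 by auto
  moreover have "real p ^ n * 1 \<le> real p ^ n * av z" using c by (intro mult_left_mono) auto
  ultimately have "rh < av ((f ^^ n) z)" by (metis le_less_trans mult_1_right not_le order_trans)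
  then show False using K_le_rh[OF K_iter[OF z, of n]] by simp
qed

lemma K_piece: assumes z: "z \<in> Kset av rh f" shows "av z < 1 \<or> av (z - 1) < 1"
proof (rule ccontr)
  assume c: "\<not> ?thesis"
  have z1: "av z = 1" using K_le1[OF z] c by simp
  have zm1: "av (z - 1) = 1" using av_diff[of z 1] z1 c by simp
  define u where "u = z + dl"
  have u1: "av u = 1" unfolding u_def using av_dom[of dl z] z1 dl_lt1 by simp
  have um1: "av (u - 1) = 1" unfolding u_def using av_dom[of dl "z - 1"] zm1 dl_lt1
    by (simp add: algebra_simps)
  have a2: "av ((lam / of_nat p) * u ^ p * (u - 1)) = real p"
    unfolding av_mult av_power u1 um1 av_lamp[OF lam1] by simp
  have a1: "av (u ^ (p + 1)) = 1" unfolding av_power u1 by simp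
  have "av (u ^ (p+1)) < av ((lam / of_nat p) * u ^ p * (u - 1))" using a1 a2 p_ge2 by simp
  then have "av ((lam / of_nat p) * u ^ p * (u - 1) - u ^ (p+1)) = real p"
    using av_dom_diff a2 by simp
  then have aPm: "av (Pm u) = real p" unfolding Pmap_alt using av_commute by metis
  have uu: "av u \<le> rh" using u1 rh1 by simp
  have small: "av (Q u - dl) < 1" using av_diff[of "Q u" dl] ps_lt1[OF uu] dl_lt1 by simp
  have "f z = Pm u + (Q u - dl)" unfolding f_eq u_def by simp
  then have "av (f z) = real p" using av_dom[of "Q u - dl" "Pm u"] small aPm p_ge2 by simp
  then show False using K_le1[OF K_f[OF z]] p_ge2 by simp
qed

lemma pieces_disj: "\<not> (av z < 1 \<and> av (z - 1) < 1)"
  using av_diff[of z "z - 1"] by auto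

lemma same_piece:
  assumes "av (x - y) < 1" "av x < 1 \<or> av (x - 1) < 1"
  shows "(av x < 1 \<longleftrightarrow> av y < 1) \<and> (av (x - 1) < 1 \<longleftrightarrow> av (y - 1) < 1)"
proof -
  have a: "av y \<le> max (av (y - x)) (av x)" using av_ultra[of "y - x" x] by simp
  have b: "av x \<le> max (av (x - y)) (av y)" using av_ultra[of "x - y" y] by simp
  have c: "av (y - 1) \<le> max (av (y - x)) (av (x - 1))" using av_tri[of y 1 x] by simp
  have d: "av (x - 1) \<le> max (av (x - y)) (av (y - 1))" using av_tri[of x 1 y] by simp
  show ?thesis using a b c d assms av_commute[of x y] by auto
qed

lemma Pm_lip: assumes "av u \<le> 1" "av v \<le> 1" shows "av (Pm u - Pm v) \<le> real p * av (u - v)"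
proof -
  have e: "Pm u - Pm v = (lam / of_nat p) * (u ^ p - v ^ p) + (1 - lam / of_nat p) * (u ^ (p+1) - v ^ (p+1))"
    unfolding Pmap_def by (simp add: algebra_simps)
  have a: "av ((lam / of_nat p) * (u ^ p - v ^ p)) \<le> real p * av (u - v)"
    unfolding av_mult av_lamp[OF lam1] using power_diff_le1[OF assms] by (intro mult_left_mono) auto
  have b: "av ((1 - lam / of_nat p) * (u ^ (p+1) - v ^ (p+1))) \<le> real p * av (u - v)"
    unfolding av_mult av_1_lamp[OF lam1] using power_diff_le1[OF assms, of "p+1"] by (intro mult_left_mono) auto
  show ?thesis unfolding e using av_ultra[of "(lam / of_nat p) * (u ^ p - v ^ p)"
      "(1 - lam / of_nat p) * (u ^ (p+1) - v ^ (p+1))"] a b by simp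
qed

lemma f_lip: assumes "av x \<le> 1" "av y \<le> 1" shows "av (f x - f y) \<le> real p * av (x - y)"
proof -
  have u: "av (x + dl) \<le> 1" "av (y + dl) \<le> 1" using av_shift assms by auto
  have e: "f x - f y = (Pm (x + dl) - Pm (y + dl)) + (Q (x + dl) - Q (y + dl))"
    unfolding f_eq by simp
  have a: "av (Pm (x + dl) - Pm (y + dl)) \<le> real p * av (x - y)" using Pm_lip[OF u] by simp
  have "av (x + dl) \<le> rh" "av (y + dl) \<le> rh" using u rh1 by auto
  then have "av (Q (x + dl) - Q (y + dl)) \<le> av (x - y)" using ps_lip[of "x + dl" "y + dl"] by simp
  also have "\<dots> \<le> real p * av (x - y)" using p_ge2 mult_right_mono[of 1 "real p" "av (x - y)"] by simp
  finally show ?thesis unfolding e using av_ultra[of "Pm (x + dl) - Pm (y + dl)" "Q (x + dl) - Q (y + dl)"] a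
    by simp
qed

end

context cpl begin

lemma av_2_odd: assumes "p \<noteq> 2" shows "av (2 :: 'a) = 1"
proof (rule ccontr)
  assume c: "av (2 :: 'a) \<noteq> 1"
  have le: "av (2::'a) \<le> 1" using av_of_nat_le1[of 2] by simp
  then have lt: "av (2::'a) < 1" using c by simp
  have "p > 2" using assms p_ge2 by linarith
  then have "odd p" using prime_p prime_odd_nat by blast
  then obtain k where k: "p = 2 * k + 1" using oddE by blast
  have "(of_nat p :: 'a) = 2 * of_nat k + 1" using k by simp
  moreover have "av (2 * (of_nat k :: 'a)) < 1"
  proof -
    have "av (2::'a) * av (of_nat k :: 'a) \<le> av (2::'a) * 1"
      using av_of_nat_le1[of k] by (intro mult_left_mono) auto
    then show ?thesis using lt unfolding av_mult by simp
  qed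
  ultimately have "av (of_nat p :: 'a) = 1" using av_dom[of "2 * of_nat k" 1] by (simp only: add.commute av_1)
  moreover have "1 / real p \<noteq> 1" using p_ge2 by simp
  ultimately show False using av_p by simp
qed

lemma bad_exists: "\<exists>e. av e = 1 \<and> av (e - 1) = 1"
proof (cases "p = 2")
  case False
  then show ?thesis using av_2_odd[OF False] by (intro exI[of _ "-1"]) simp
next
  case True
  have "degree [:1, 1, 1::'a:] = 2" by simp
  then obtain w where w: "poly [:1, 1, 1::'a:] w = 0" using algclosed by (metis zero_less_numeral)
  then have w0: "1 + (w + w ^ 2) = 0" by (simp add: algebra_simps power2_eq_square)
  have aw: "av w = 1"
  proof (rule ccontr)
    assume "av w \<noteq> 1"
    then consider "av w < 1" | "av w > 1" by linarith
    then show False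
    proof cases
      case 1
      have "av w * av w \<le> av w * 1" using 1 by (intro mult_left_mono) auto
      then have "av (w ^ 2) < 1" using 1 unfolding power2_eq_square av_mult by simp
      then have "av (w + w ^ 2) < 1" using av_ultra[of w "w^2"] 1 by simp
      then have "av (1 + (w + w ^ 2)) = 1" using av_dom[of "w + w^2" 1] by simp
      then show False using w0 by simp
    next
      case 2
      have sq: "av (w ^ 2) = av w * av w" unfolding power2_eq_square by (rule av_mult)
      have lt: "av w < av w * av w" using 2 by simp
      have "av (1 + w) \<le> av w" using av_ultra[of 1 w] 2 by simp
      then have "av (1 + w) < av (w ^ 2)" using lt sq by linarith
      then have "av (w ^ 2 + (1 + w)) = av (w ^ 2)" by (rule av_dom)
      moreover have "w ^ 2 + (1 + w) = 0" using w0 by (simp add: algebra_simps)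
      ultimately show False using sq 2 by simp
    qed
  qed
  have awm: "av (w - 1) = 1"
  proof (rule ccontr)
    assume "av (w - 1) \<noteq> 1"
    moreover have "av (w - 1) \<le> 1" using av_diff[of w 1] aw by simp
    ultimately have lt: "av (w - 1) < 1" by simp
    define t where "t = w - 1"
    have a3: "av (3::'a) = 1"
    proof -
      have "av (of_nat 2 :: 'a) = 1 / 2" using av_p True by simp
      then have "av (2 :: 'a) < 1" by simp
      then have "av (1 + 2 :: 'a) = 1" using av_dom[of 2 1] by simp
      then show ?thesis by simp
    qed
    have e: "3 + (3 * t + t ^ 2) = (0::'a)" using w0 unfolding t_def by (simp add: algebra_simps power2_eq_square)
    have at: "av t < 1" using lt t_def by simp
    have "av (3 * t) < 1" using at a3 by (simp add: av_mult)
    moreover have "av (t ^ 2) < 1"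
    proof -
      have "av t * av t \<le> av t * 1" using at by (intro mult_left_mono) auto
      then show ?thesis using at unfolding power2_eq_square av_mult by simp
    qed
    ultimately have "av (3 * t + t ^ 2) < 1" using av_ultra[of "3 * t" "t ^ 2"] by simp
    then have "av (3 + (3 * t + t ^ 2) :: 'a) = 1" using av_dom[of "3 * t + t ^ 2" 3] a3 by simp
    then show False using e by simp
  qed
  show ?thesis using aw awm by blast
qed

end

context cpl begin

lemma poly_expand: "poly (T::'a poly) s = (\<Sum>i\<le>degree T. coeff T i * s ^ i)"
  by (rule poly_altdef)

lemma nostraddle:
  fixes phi :: "'a \<Rightarrow> 'a" and T :: "'a poly"
  assumes pc: "\<And>s. av s \<le> 1 \<Longrightarrow> av (phi s) < 1 \<or> av (phi s - 1) < 1"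
    and ap: "\<And>s. av s \<le> 1 \<Longrightarrow> av (phi s - poly T s) < 1"
  shows "av (phi 1 - phi 0) < 1"
proof -
  define c where "c i = coeff T i" for i
  define n where "n = degree T"
  define S where "S = (\<lambda>i. av (c i)) ` {1..n}"
  define R where "R = Max (insert 0 S)"
  have finS: "finite S" unfolding S_def by simp
  have R_ge: "av (c i) \<le> R" if "i \<in> {1..n}" for i
    unfolding R_def using finS that S_def by (intro Max_ge) auto
  have R0: "0 \<le> R" unfolding R_def using finS by (intro Max_ge) auto
  have pT: "poly T s = c 0 + (\<Sum>i\<in>{1..n}. c i * s ^ i)" for s
  proof -
    have "{..n} = insert 0 {1..n}" by auto
    then show ?thesis unfolding poly_expand c_def n_def by (simp add: c_def)
  qed
  have phi0: "av (phi 0) \<le> 1"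
    using pc[of 0] av_ultra[of "phi 0 - 1" 1] by auto
  have c0: "av (c 0) \<le> 1"
  proof -
    have "poly T 0 = c 0" using pT[of 0] by simp
    then have "av (c 0 - phi 0) < 1" using ap[of 0] av_commute by simp
    then show ?thesis using av_ultra[of "c 0 - phi 0" "phi 0"] phi0 by simp
  qed
  show ?thesis
  proof (cases "R < 1")
    case True
    have "poly T 1 - poly T 0 = (\<Sum>i\<in>{1..n}. c i)" using pT[of 1] pT[of 0] by simp
    then have d: "av (poly T 1 - poly T 0) < 1"
      using av_sum_le[of "{1..n}" c R] R_ge R0 True by simp
    have a: "av (phi 1 - poly T 1) < 1" using ap[of 1] by simp
    have b: "av (poly T 0 - phi 0) < 1" using ap[of 0] av_commute by simp
    have "av (phi 1 - phi 0) \<le> max (av (phi 1 - poly T 1)) (av (poly T 1 - phi 0))" by (rule av_tri)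
    moreover have "av (poly T 1 - phi 0) \<le> max (av (poly T 1 - poly T 0)) (av (poly T 0 - phi 0))" by (rule av_tri)
    ultimately show ?thesis using a b d by simp
  next
    case False
    then have R1: "1 \<le> R" by simp
    have "R \<in> insert 0 S" unfolding R_def using finS by (intro Max_in) auto
    then have "R \<in> S" using R1 by auto
    then have Dne: "{i \<in> {1..n}. av (c i) = R} \<noteq> {}" unfolding S_def by auto
    define d where "d = Max {i \<in> {1..n}. av (c i) = R}"
    have dprop: "d \<in> {1..n}" "av (c d) = R"
      using Max_in[of "{i \<in> {1..n}. av (c i) = R}"] Dne unfolding d_def by auto
    have dmax: "av (c i) < R" if "i \<in> {d<..n}" for i
    proof -
      have "av (c i) \<le> R" using that dprop R_ge by auto
      moreover have "av (c i) \<noteq> R"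
      proof
        assume "av (c i) = R"
        then have "i \<le> d" unfolding d_def using that dprop by (intro Max_ge) auto
        then show False using that by simp
      qed
      ultimately show ?thesis by simp
    qed
    obtain y where y1: "av (c 0 - y) \<le> R"
      and y2: "\<And>x. av (x - y) < R \<Longrightarrow> 1 \<le> av x \<and> 1 \<le> av (x - 1)"
    proof (cases "R = 1")
      case True
      obtain e where e: "av e = 1" "av (e - 1) = 1" using bad_exists by blast
      show ?thesis
      proof (rule that[of e])
        show "av (c 0 - e) \<le> R" using av_diff[of "c 0" e] c0 e True by simp
        fix x assume "av (x - e) < R"
        then have x: "av (x - e) < 1" using True by simp
        have "av (e + (x - e)) = 1" using av_dom[of "x - e" e] x e by simp
        moreover have "av ((e - 1) + (x - e)) = 1" using av_dom[of "x - e" "e - 1"] x e by simp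
        ultimately show "1 \<le> av x \<and> 1 \<le> av (x - 1)" by simp
      qed
    next
      case False
      then have Rg: "1 < R" using R1 by simp
      show ?thesis
      proof (rule that[of "c 0 + c d"])
        show "av (c 0 - (c 0 + c d)) \<le> R" using dprop by simp
        have ay: "av (c d + c 0) = R" using av_dom[of "c 0" "c d"] dprop c0 Rg by simp
        fix x assume x: "av (x - (c 0 + c d)) < R"
        have "av ((c d + c 0) + (x - (c 0 + c d))) = R" using av_dom[of "x - (c 0 + c d)" "c d + c 0"] ay x by simp
        then have ax: "av x = R" by simp
        have "av (x - 1) = R" using av_dom_diff[of 1 x] ax Rg by simp
        then show "1 \<le> av x \<and> 1 \<le> av (x - 1)" using ax Rg by simp
      qed
    qed
    define g where "g = (\<Sum>i\<in>{1..d}. monom (c i) i) + [:c 0 - y:]"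
    have pg: "poly g s = (\<Sum>i\<in>{1..d}. c i * s ^ i) + (c 0 - y)" for s
      unfolding g_def by (simp add: poly_sum poly_monom)
    have cgd: "coeff g d = c d"
    proof -
      have "coeff g d = (\<Sum>i\<in>{1..d}. coeff (monom (c i) i) d) + coeff [:c 0 - y:] d"
        unfolding g_def by (simp add: coeff_sum)
      also have "\<dots> = c d" using dprop by (cases d) (auto simp: coeff_monom)
      finally show ?thesis .
    qed
    have cdnz: "c d \<noteq> 0" using dprop R1 by auto
    have degg: "0 < degree g" using le_degree[of g d] cgd cdnz dprop by fastforce
    obtain s where s: "poly g s = 0" using algclosed[OF degg] by blast
    have Rpos: "0 < R" using R1 by simp
    have s1: "av s \<le> 1"
    proof (rule ccontr)
      assume "\<not> av s \<le> 1"
      then have sg: "1 < av s" by simp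
      have split: "{1..d} = insert d {1..<d}" using dprop by auto
      have pg2: "poly g s = c d * s ^ d + ((\<Sum>i\<in>{1..<d}. c i * s ^ i) + (c 0 - y))"
        unfolding pg split by (simp add: algebra_simps)
      have top: "av (c d * s ^ d) = R * av s ^ d" by (simp add: av_mult av_power dprop)
      have sd1: "1 < av s ^ d" using sg dprop by (intro one_less_power) auto
      have rest1: "av (\<Sum>i\<in>{1..<d}. c i * s ^ i) < R * av s ^ d"
      proof (rule av_sum_less)
        fix i assume i: "i \<in> {1..<d}"
        have "av (c i * s ^ i) = av (c i) * av s ^ i" by (simp add: av_mult av_power)
        also have "\<dots> \<le> R * av s ^ i" using R_ge[of i] i dprop by (intro mult_right_mono) auto
        also have "\<dots> < R * av s ^ d" using Rpos sg i by (intro mult_strict_left_mono power_strict_increasing) auto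
        finally show "av (c i * s ^ i) < R * av s ^ d" .
      qed (use Rpos sd1 in auto)
      have "R * 1 < R * av s ^ d" using Rpos sd1 by (intro mult_strict_left_mono) auto
      then have rest2: "av (c 0 - y) < R * av s ^ d" using y1 by simp
      have "av ((\<Sum>i\<in>{1..<d}. c i * s ^ i) + (c 0 - y)) < R * av s ^ d"
        using av_ultra[of "\<Sum>i\<in>{1..<d}. c i * s ^ i" "c 0 - y"] rest1 rest2 by simp
      then have "av (poly g s) = R * av s ^ d" unfolding pg2 using av_dom top by simp
      then show False using s Rpos sg by simp
    qed
    have "poly T s - y = (\<Sum>i\<in>{d<..n}. c i * s ^ i)"
    proof -
      have split: "{1..n} = {1..d} \<union> {d<..n}" using dprop by auto
      have "(\<Sum>i\<in>{1..n}. c i * s ^ i) = (\<Sum>i\<in>{1..d}. c i * s ^ i) + (\<Sum>i\<in>{d<..n}. c i * s ^ i)"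
        unfolding split by (rule sum.union_disjoint) auto
      moreover have "(\<Sum>i\<in>{1..d}. c i * s ^ i) = y - c 0" using s pg[of s] by (simp add: algebra_simps)
      ultimately show ?thesis using pT[of s] by simp
    qed
    moreover have "av (\<Sum>i\<in>{d<..n}. c i * s ^ i) < R"
    proof (rule av_sum_less)
      fix i assume i: "i \<in> {d<..n}"
      have "av (c i * s ^ i) = av (c i) * av s ^ i" by (simp add: av_mult av_power)
      also have "\<dots> \<le> av (c i)" using s1 by (simp add: mult_left_le power_le_one)
      also have "\<dots> < R" using dmax i by simp
      finally show "av (c i * s ^ i) < R" .
    qed (use Rpos in auto)
    ultimately have "av (poly T s - y) < R" by simp
    moreover have "av (phi s - poly T s) < 1" using ap s1 by simp
    ultimately have "av (phi s - y) < R" using av_tri[of "phi s" y "poly T s"] R1 by simp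
    then have "1 \<le> av (phi s) \<and> 1 \<le> av (phi s - 1)" by (rule y2)
    then show ?thesis using pc[OF s1] by simp
  qed
qed

end

context setting begin

definition "PP = monom (lam / of_nat p) p + monom (1 - lam / of_nat p) (p + 1)"
definition "QNp N = (\<Sum>i<N. monom (q i) i)"
definition "Fp N = pcompose (PP + QNp N) [:dl, 1:] - [:dl:]"

lemma poly_PP: "poly PP x = Pm x"
  unfolding PP_def Pmap_def by (simp add: poly_monom)

lemma poly_QNp: "poly (QNp N) x = (\<Sum>i<N. q i * x ^ i)"
  unfolding QNp_def by (simp add: poly_sum poly_monom)

lemma poly_Fp: "poly (Fp N) x = Pm (x + dl) + (\<Sum>i<N. q i * (x + dl) ^ i) - dl"
  unfolding Fp_def by (simp add: poly_pcompose poly_PP poly_QNp add.commute)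

lemma Fp_approx:
  assumes x: "av x \<le> 1" and N: "\<And>i. i \<ge> N \<Longrightarrow> av (q i) * rh ^ i \<le> \<tau>" and t0: "0 \<le> \<tau>"
  shows "av (f x - poly (Fp N) x) \<le> \<tau>"
proof -
  have u: "av (x + dl) \<le> rh" using av_shift[OF x] rh1 by simp
  have "f x - poly (Fp N) x = Q (x + dl) - (\<Sum>i<N. q i * (x + dl) ^ i)"
    unfolding f_eq poly_Fp by simp
  then show ?thesis using ps_tail[OF u N t0] by simp
qed

lemma Fp_lip:
  assumes x: "av x \<le> 1" and y: "av y \<le> 1"
  shows "av (poly (Fp N) x - poly (Fp N) y) \<le> real p * av (x - y)"
proof -
  have u: "av (x + dl) \<le> 1" "av (y + dl) \<le> 1" using av_shift x y by auto
  have e: "poly (Fp N) x - poly (Fp N) y = (Pm (x + dl) - Pm (y + dl))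
       + ((\<Sum>i<N. q i * (x + dl) ^ i) - (\<Sum>i<N. q i * (y + dl) ^ i))"
    unfolding poly_Fp by simp
  have a: "av (Pm (x + dl) - Pm (y + dl)) \<le> real p * av (x - y)" using Pm_lip[OF u] by simp
  have "av (x + dl) \<le> rh" "av (y + dl) \<le> rh" using u rh1 by auto
  then have "av ((\<Sum>i<N. q i * (x + dl) ^ i) - (\<Sum>i<N. q i * (y + dl) ^ i)) \<le> av (x - y)"
    using QN_lip[of "x + dl" "y + dl" N] by simp
  also have "\<dots> \<le> real p * av (x - y)" using p_ge2 mult_right_mono[of 1 "real p" "av (x - y)"] by simp
  finally show ?thesis unfolding e using av_ultra a by (meson max.bounded_iff order_trans)
qed

definition "Tk N z w k = (pcompose (Fp N) ^^ k) [:z, w - z:]"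

lemma poly_Tk0: "poly (Tk N z w 0) s = z + s * (w - z)"
  unfolding Tk_def by simp

lemma poly_TkS: "poly (Tk N z w (Suc k)) s = poly (Fp N) (poly (Tk N z w k) s)"
  unfolding Tk_def by (simp add: poly_pcompose)

lemma iter_approx:
  assumes seg: "\<And>s. av s \<le> 1 \<Longrightarrow> z + s * (w - z) \<in> Kset av rh f"
    and N: "\<And>i. i \<ge> N \<Longrightarrow> av (q i) * rh ^ i \<le> \<tau>" and t0: "0 \<le> \<tau>"
    and small: "real p ^ n * \<tau> < 1"
    and s: "av s \<le> 1"
  shows "k \<le> n \<Longrightarrow> av ((f ^^ k) (z + s * (w - z)) - poly (Tk N z w k) s) \<le> real p ^ k * \<tau>"
proof (induction k)
  case 0 then show ?case using t0 by (simp add: poly_Tk0)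
next
  case (Suc k)
  define y where "y = (f ^^ k) (z + s * (w - z))"
  define y' where "y' = poly (Tk N z w k) s"
  have ek: "av (y - y') \<le> real p ^ k * \<tau>" using Suc unfolding y_def y'_def by simp
  have "real p ^ k * \<tau> \<le> real p ^ n * \<tau>" using Suc(2) p_ge2 t0 by (intro mult_right_mono power_increasing) auto
  then have ek1: "av (y - y') < 1" using ek small by simp
  have yK: "y \<in> Kset av rh f" unfolding y_def using K_iter seg[OF s] by blast
  have y1: "av y \<le> 1" using K_le1[OF yK] .
  have y'1: "av y' \<le> 1" using av_ultra[of "y' - y" y] ek1 y1 av_commute[of y y'] by simp
  have a: "av (f y - poly (Fp N) y) \<le> \<tau>" using Fp_approx[OF y1 N t0] by simp
  have b: "av (poly (Fp N) y - poly (Fp N) y') \<le> real p * (real p ^ k * \<tau>)"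
    using Fp_lip[OF y1 y'1, of N] ek p_ge2 by (meson mult_left_mono of_nat_0_le_iff order_trans)
  have "1 \<le> real p ^ Suc k" using p_ge2 by (intro one_le_power) auto
  then have c: "\<tau> \<le> real p ^ Suc k * \<tau>" using t0 mult_right_mono[of 1 "real p ^ Suc k" \<tau>] by simp
  have "av (f y - poly (Fp N) y') \<le> max (av (f y - poly (Fp N) y)) (av (poly (Fp N) y - poly (Fp N) y'))"
    by (rule av_tri)
  also have "\<dots> \<le> real p ^ Suc k * \<tau>" using a b c by simp
  finally show ?case unfolding y_def y'_def poly_TkS by simp
qed

lemma seg_same:
  assumes seg: "\<And>s. av s \<le> 1 \<Longrightarrow> z + s * (w - z) \<in> Kset av rh f"
  shows "av ((f ^^ n) w - (f ^^ n) z) < 1"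
proof -
  define \<tau> where "\<tau> = 1 / (2 * real p ^ n)"
  have t0: "0 < \<tau>" unfolding \<tau>_def using p_ge2 by simp
  have small: "real p ^ n * \<tau> < 1" unfolding \<tau>_def using p_ge2 by simp
  obtain N where N: "\<forall>i\<ge>N. av (q i) * rh ^ i < \<tau>" using terms_to0[OF t0] by blast
  have N': "\<And>i. i \<ge> N \<Longrightarrow> av (q i) * rh ^ i \<le> \<tau>" using N less_imp_le by blast
  let ?phi = "\<lambda>s. (f ^^ n) (z + s * (w - z))"
  have "av (?phi 1 - ?phi 0) < 1"
  proof (rule nostraddle[where T = "Tk N z w n"])
    fix s :: 'a assume s: "av s \<le> 1"
    show "av (?phi s) < 1 \<or> av (?phi s - 1) < 1" using K_piece K_iter seg[OF s] by blast
    show "av (?phi s - poly (Tk N z w n) s) < 1"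
      using iter_approx[where N=N and \<tau>=\<tau> and n=n and k=n and s=s, OF seg N' less_imp_le[OF t0] small s order_refl] small by simp
  qed
  then show ?thesis by simp
qed

lemma ball_seg:
  assumes "is_ball av D" "z \<in> D" "w \<in> D" "av s \<le> 1"
  shows "z + s * (w - z) \<in> D"
proof -
  obtain c r where D: "D = {x. av (x - c) < r} \<or> D = {x. av (x - c) \<le> r}" using assms(1) unfolding is_ball_def by blast
  have e: "z + s * (w - z) - c = (z - c) + s * (w - z)" by simp
  have a: "av (s * (w - z)) \<le> av (w - z)" using assms(4) by (simp add: av_mult mult_left_le_one_le)
  have b: "av (w - z) \<le> max (av (w - c)) (av (z - c))" using av_tri[of w z c] av_commute[of c z] by simp
  have "av (z + s * (w - z) - c) \<le> max (av (z - c)) (av (w - c))"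
    unfolding e using av_ultra[of "z - c" "s * (w - z)"] a b by auto
  then show ?thesis using D assms(2,3) by auto
qed

lemma ball_ne: assumes "is_ball av D" obtains c where "c \<in> D"
proof -
  obtain c r where "0 < r" "D = {x. av (x - c) < r} \<or> D = {x. av (x - c) \<le> r}"
    using assms unfolding is_ball_def by blast
  then have "c \<in> D" by auto
  then show ?thesis using that by blast
qed

lemma part1:
  assumes "is_ball av D" "D \<subseteq> Kset av rh f" "z \<in> D" "w \<in> D"
  shows "av ((f ^^ n) w - (f ^^ n) z) < 1"
  by (rule seg_same) (use ball_seg assms in blast)

end

context setting begin

definition "ind x = (if av x < 1 then (0::nat) else 1)"

lemma iter_comp: "(f ^^ (n + j)) z = (f ^^ j) ((f ^^ n) z)"
  by (simp add: funpow_add add.commute)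

lemma ind_same: assumes "x \<in> Kset av rh f" "av (x - y) < 1" shows "ind y = ind x"
  using same_piece[OF assms(2) K_piece[OF assms(1)]] unfolding ind_def by auto

lemma itin_ind: assumes "z \<in> Kset av rh f" "\<And>n. th n = ind ((f ^^ n) z)" shows "itinerary av f z th"
  unfolding itinerary_def
proof
  fix n
  have K: "(f ^^ n) z \<in> Kset av rh f" using K_iter assms(1) by blast
  show "th n = 0 \<and> av ((f ^^ n) z) < 1 \<or> th n = 1 \<and> av ((f ^^ n) z - 1) < 1"
    using K_piece[OF K] assms(2)[of n] unfolding ind_def by auto
qed

lemma lipK: assumes "x \<in> Kset av rh f" "y \<in> Kset av rh f"
  shows "av ((f ^^ j) x - (f ^^ j) y) \<le> real p ^ j * av (x - y)"
proof (induction j)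
  case 0 then show ?case by simp
next
  case (Suc j)
  have a: "av ((f ^^ j) x) \<le> 1" "av ((f ^^ j) y) \<le> 1" using K_le1 K_iter assms by blast+
  have "av ((f ^^ Suc j) x - (f ^^ Suc j) y) \<le> real p * av ((f ^^ j) x - (f ^^ j) y)"
    using f_lip[OF a] by simp
  also have "\<dots> \<le> real p * (real p ^ j * av (x - y))" using Suc by (intro mult_left_mono) auto
  finally show ?case by simp
qed

lemma main:
  assumes ball: "is_ball av D" and DK: "D \<subseteq> Kset av rh f"
  shows "\<exists>th. (\<forall>z\<in>D. itinerary av f z th) \<and>
           (\<not> preperiodic_seq th \<longrightarrow> wandering f D \<and> \<not> attracted av rh f D)"
proof -
  obtain c0 where c0: "c0 \<in> D" using ball_ne[OF ball] by blast
  define th where "th n = ind ((f ^^ n) c0)" for n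
  have thz: "th n = ind ((f ^^ n) z)" if z: "z \<in> D" for z n
  proof -
    have "av ((f ^^ n) z - (f ^^ n) c0) < 1" using part1[OF ball DK c0 z] .
    then have "av ((f ^^ n) c0 - (f ^^ n) z) < 1" using av_commute by metis
    moreover have "(f ^^ n) c0 \<in> Kset av rh f" using K_iter c0 DK by blast
    ultimately show ?thesis unfolding th_def using ind_same by metis
  qed
  have itin: "\<forall>z\<in>D. itinerary av f z th"
    using itin_ind thz DK by blast
  have wand: "wandering f D" if np: "\<not> preperiodic_seq th"
    unfolding wandering_def
  proof (intro allI impI)
    fix n m assume "(f ^^ n) ` D \<inter> (f ^^ m) ` D \<noteq> {}"
    then obtain z w where zw: "z \<in> D" "w \<in> D" "(f ^^ n) z = (f ^^ m) w" by blast
    have key: "th (n + j) = th (m + j)" for j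
      using thz[OF zw(1), of "n + j"] thz[OF zw(2), of "m + j"] iter_comp[of n j z] iter_comp[of m j w] zw(3)
      by simp
    have pp: "preperiodic_seq th" if "a < b" "\<And>j. th (a + j) = th (b + j)" for a b
      unfolding preperiodic_seq_def
    proof (intro exI conjI allI impI)
      show "0 < b - a" using that by simp
      fix i assume i: "a \<le> i"
      have "th (i + (b - a)) = th (b + (i - a))" using i that(1) by (simp add: add.commute)
      also have "\<dots> = th (a + (i - a))" using that(2) by simp
      also have "\<dots> = th i" using i by simp
      finally show "th (i + (b - a)) = th i" .
    qed
    show "n = m"
    proof (rule ccontr)
      assume "n \<noteq> m"
      then consider "n < m" | "m < n" by linarith
      then show False
      proof cases
        case 1 then show False using pp[of n m] key np by simp
      next
        case 2 then show False using pp[of m n] key np by simp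
      qed
    qed
  qed
  have natt: "\<not> attracted av rh f D" if np: "\<not> preperiodic_seq th"
  proof
    assume "attracted av rh f D"
    then obtain z z0 k c r where z: "z \<in> D" and ap: "attracting_periodic av rh f z0 k"
      and zb: "z \<in> open_ball av c r" and sub: "open_ball av c r \<subseteq> basin av rh f z0 k"
      unfolding attracted_def by blast
    have k: "0 < k" and z0K: "z0 \<in> Kset av rh f" using ap unfolding attracting_periodic_def by auto
    obtain m where conv: "conv_to av (\<lambda>n. (f ^^ (n * k + m)) z) z0"
      using sub zb unfolding basin_def by blast
    have e: "0 < 1 / real p ^ k" using p_ge2 by simp
    obtain N where N: "\<forall>n\<ge>N. av ((f ^^ (n * k + m)) z - z0) < 1 / real p ^ k"
      using conv e unfolding conv_to_def by blast
    have orb: "th (n * k + m + j) = ind ((f ^^ j) z0)" if n: "n \<ge> N" and j: "j < k" for n j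
    proof -
      define x where "x = (f ^^ (n * k + m)) z"
      have xK: "x \<in> Kset av rh f" unfolding x_def using K_iter z DK by blast
      have "av ((f ^^ j) x - (f ^^ j) z0) \<le> real p ^ j * av (x - z0)" by (rule lipK[OF xK z0K])
      also have "\<dots> < real p ^ j * (1 / real p ^ k)"
        using N n p_ge2 unfolding x_def by (intro mult_strict_left_mono) auto
      also have "\<dots> \<le> 1" using j p_ge2 by (simp add: power_increasing)
      finally have "av ((f ^^ j) x - (f ^^ j) z0) < 1" .
      then have "av ((f ^^ j) z0 - (f ^^ j) x) < 1" using av_commute by metis
      moreover have "(f ^^ j) z0 \<in> Kset av rh f" using K_iter z0K by blast
      ultimately have "ind ((f ^^ j) x) = ind ((f ^^ j) z0)" using ind_same by metis
      moreover have "th (n * k + m + j) = ind ((f ^^ j) x)"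
        unfolding thz[OF z] x_def iter_comp ..
      ultimately show ?thesis by simp
    qed
    have "preperiodic_seq th"
      unfolding preperiodic_seq_def
    proof (intro exI conjI allI impI)
      show "0 < k" by (rule k)
      fix i assume i: "N * k + m \<le> i"
      define a where "a = i - m"
      have ia: "i = a div k * k + m + a mod k" unfolding a_def using i by simp
      have aN: "N \<le> a div k"
      proof -
        have "N * k \<le> a" unfolding a_def using i by simp
        then have "N * k div k \<le> a div k" by (rule div_le_mono)
        then show ?thesis using k by simp
      qed
      have jk: "a mod k < k" using k by simp
      have e1: "i + k = (a div k + 1) * k + m + a mod k" using ia by (simp add: algebra_simps)
      have "th (i + k) = ind ((f ^^ (a mod k)) z0)" unfolding e1 by (rule orb) (use aN jk in auto)
      moreover have "th i = ind ((f ^^ (a mod k)) z0)" by (subst ia, rule orb[OF aN jk])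
      ultimately show "th (i + k) = th i" by simp
    qed
    then show False using np by simp
  qed
  show ?thesis using itin wand natt by blast
qed

end

theorem lemma3p8:
  fixes av :: "'a::field_char_0 \<Rightarrow> real" and p :: nat and rh :: real
    and q :: "nat \<Rightarrow> 'a" and lam :: 'a and D :: "'a set"
  assumes "is_Cp av p"
    and "1 < rh" and "\<exists>x. x \<noteq> 0 \<and> av x = rh"
    and "in_H av rh q" and "Bnorm av rh q < rho p"
    and "av (lam - 1) < 1"
    and "is_ball av D" and "D \<subseteq> Kset av rh (Qlam av q p lam)"
  shows "\<exists>\<theta>. (\<forall>z\<in>D. itinerary av (Qlam av q p lam) z \<theta>) \<and>
           (\<not> preperiodic_seq \<theta> \<longrightarrow>
              wandering (Qlam av q p lam) D \<and> \<not> attracted av rh (Qlam av q p lam) D)"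
proof -
  interpret S: setting av p rh q lam
    using assms unfolding setting_def setting_axioms_def cpl_def by blast
  show ?thesis using S.main assms(7,8) by blast
qed

end
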